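(* Let $S$ be a nonelementary hyperbolic surface with at least one cusp. Then every vector $u\in T^1S$ whose forward geodesic orbit $\{g_tu: t\ge0\}$ is dense in the nonwandering set $\mathrm{NW}(g_t)$ of the geodesic flow is cusp-recurrent.
   Context: $S=\Gamma\backslash\mathbb H$ with $\Gamma$ a torsion-free Fuchsian group; $g_t$ is the geodesic flow on $T^1S$, and for $u\in T^1S$, $u(t)$ denotes the basepoint of $g_tu$. $\mathrm{NW}(g_t)$ is the set of nonwandering vectors of $g_t$. A closed horocycle in $S$ is the projection of a horocycle in $\mathbb H$ centered at the fixed point of a parabolic element of $\Gamma$. A vector $u\in T^1S$ is cusp-recurrent if the geodesic ray $u(\mathbb R^+)$ does not escape to infinity through a cusp (equivalently, for a lift $\tilde u$, $\tilde u(+\infty)$ is not fixed by a parabolic element of $\Gamma$) and there exist closed horocycles $H_n$ in $S$ with lengths tending to $0$ and times $t_n\ge0$ with $u(t_n)\in H_n$. *)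

theory Defs
  imports "HOL-Analysis.Analysis"
begin

text \<open>The unit tangent bundle of the hyperbolic plane is identified with
PSL(2,R); we work in SL(2,R) (matrices real^2^2 of determinant 1) and represent a
Fuchsian group by its full preimage in SL(2,R), which contains -I.  A matrix h
represents the unit tangent vector whose basepoint is the Moebius image h(i); the
geodesic flow is right multiplication by diag(e^(t/2), e^(-t/2)), so the forward
endpoint of the geodesic determined by h is the boundary point h(infinity), i.e.
the projective point of the first column of h.  T^1S is the quotient of SL(2,R)
by left multiplication by the group; quotient-level notions are expressed on
saturated lifts (the quotient map is open).\<close>

definition mat2 :: "real \<Rightarrow> real \<Rightarrow> real \<Rightarrow> real \<Rightarrow> real^2^2" where
  "mat2 a b c d = (\<chi> i j. if i = 1 then (if j = 1 then a else b) else (if j = 1 then c else d))"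

definition SL2 :: "(real^2^2) set" where
  "SL2 = {m. det m = 1}"

definition mob :: "real^2^2 \<Rightarrow> complex \<Rightarrow> complex" where
  "mob m z = (complex_of_real (m$1$1) * z + complex_of_real (m$1$2)) /
             (complex_of_real (m$2$1) * z + complex_of_real (m$2$2))"

definition mpow :: "real^2^2 \<Rightarrow> nat \<Rightarrow> real^2^2" where
  "mpow g n = (((**) g) ^^ n) (mat 1)"

definition geo_a :: "real \<Rightarrow> real^2^2" where
  "geo_a t = mat2 (exp (t/2)) 0 0 (exp (- t/2))"

definition col1 :: "real^2^2 \<Rightarrow> real^2" where
  "col1 h = (\<chi> i. h$i$1)"

definition torsion_free_fuchsian :: "(real^2^2) set \<Rightarrow> bool" where
  "torsion_free_fuchsian \<Gamma> \<longleftrightarrow>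
     \<Gamma> \<subseteq> SL2 \<and> mat 1 \<in> \<Gamma> \<and> - mat 1 \<in> \<Gamma> \<and>
     (\<forall>g\<in>\<Gamma>. \<forall>h\<in>\<Gamma>. g ** h \<in> \<Gamma>) \<and> (\<forall>g\<in>\<Gamma>. matrix_inv g \<in> \<Gamma>) \<and>
     (\<forall>x. \<not> x islimpt \<Gamma>) \<and>
     (\<forall>g\<in>\<Gamma>. g \<notin> {mat 1, - mat 1} \<longrightarrow> (\<forall>n>0. mpow g n \<notin> {mat 1, - mat 1}))"

text \<open>Elementary: a finite orbit in the closed hyperbolic plane (H together with
its boundary; boundary points = lines through nonzero vectors of R^2).\<close>
definition elementary :: "(real^2^2) set \<Rightarrow> bool" where
  "elementary \<Gamma> \<longleftrightarrow>
     (\<exists>z. Im z > 0 \<and> finite ((\<lambda>g. mob g z) ` \<Gamma>)) \<or>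
     (\<exists>v::real^2. v \<noteq> 0 \<and> finite ((\<lambda>g. {c *\<^sub>R (g *v v) | c. True}) ` \<Gamma>))"

definition parabolic :: "real^2^2 \<Rightarrow> bool" where
  "parabolic g \<longleftrightarrow> g \<in> SL2 \<and> \<bar>g$1$1 + g$2$2\<bar> = 2 \<and> g \<noteq> mat 1 \<and> g \<noteq> - mat 1"

definition fixes_bdry :: "real^2^2 \<Rightarrow> real^2 \<Rightarrow> bool" where
  "fixes_bdry g v \<longleftrightarrow> (\<exists>c. g *v v = c *\<^sub>R v)"

definition parabolic_fixed_point :: "(real^2^2) set \<Rightarrow> real^2 \<Rightarrow> bool" where
  "parabolic_fixed_point \<Gamma> v \<longleftrightarrow> v \<noteq> 0 \<and> (\<exists>p\<in>\<Gamma>. parabolic p \<and> fixes_bdry p v)"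

definition nonwandering :: "(real^2^2) set \<Rightarrow> real^2^2 \<Rightarrow> bool" where
  "nonwandering \<Gamma> h \<longleftrightarrow> h \<in> SL2 \<and>
     (\<forall>U. open U \<and> h \<in> U \<longrightarrow>
        (\<forall>T. \<exists>t>T. \<exists>\<gamma>\<in>\<Gamma>. \<exists>x\<in>U \<inter> SL2. \<gamma> ** x ** geo_a t \<in> U))"

definition fwd_orbit_lift :: "(real^2^2) set \<Rightarrow> real^2^2 \<Rightarrow> (real^2^2) set" where
  "fwd_orbit_lift \<Gamma> h = {\<gamma> ** h ** geo_a t | \<gamma> t. \<gamma> \<in> \<Gamma> \<and> t \<ge> 0}"

text \<open>A horocycle in H centered at the boundary point k(infinity) (first column of k),
namely the orbit of k(i) under k N k^-1.  Every horocycle is of this form.\<close>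
definition horocycle :: "real^2^2 \<Rightarrow> complex set" where
  "horocycle k = {mob (k ** mat2 1 s 0 1) \<i> | s. True}"

definition closed_horocycle_data :: "(real^2^2) set \<Rightarrow> real^2^2 \<Rightarrow> bool" where
  "closed_horocycle_data \<Gamma> k \<longleftrightarrow> k \<in> SL2 \<and> parabolic_fixed_point \<Gamma> (col1 k)"

text \<open>Hyperbolic length of the projected closed horocycle: hyperbolic length of a
fundamental arc of horocycle k for the stabilizer of its center, which is generated
by k n_lambda k^-1 with n_lambda = [[1,lambda],[0,1]] (the arc s in [0,lambda] has
hyperbolic length lambda).\<close>
definition horocycle_length :: "(real^2^2) set \<Rightarrow> real^2^2 \<Rightarrow> real" where
  "horocycle_length \<Gamma> k = Inf {l. l > 0 \<and> k ** mat2 1 l 0 1 ** matrix_inv k \<in> \<Gamma>}"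

definition cusp_recurrent :: "(real^2^2) set \<Rightarrow> real^2^2 \<Rightarrow> bool" where
  "cusp_recurrent \<Gamma> h \<longleftrightarrow>
     \<not> parabolic_fixed_point \<Gamma> (col1 h) \<and>
     (\<exists>K :: nat \<Rightarrow> real^2^2. \<exists>\<tau> :: nat \<Rightarrow> real.
        (\<forall>n. closed_horocycle_data \<Gamma> (K n)) \<and>
        (\<lambda>n. horocycle_length \<Gamma> (K n)) \<longlonglongrightarrow> 0 \<and>
        (\<forall>n. \<tau> n \<ge> 0 \<and> (\<exists>\<gamma>\<in>\<Gamma>. mob (\<gamma> ** h ** geo_a (\<tau> n)) \<i> \<in> horocycle (K n))))"

end

theory Submission
  imports Defs
begin

lemma mat2_nth [simp]:
  "mat2 a b c d $ 1 $ 1 = a" "mat2 a b c d $ 1 $ 2 = b"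
  "mat2 a b c d $ 2 $ 1 = c" "mat2 a b c d $ 2 $ 2 = d"
  by (simp_all add: mat2_def)

lemma mat2_eta: "M = mat2 (M$1$1) (M$1$2) (M$2$1) (M$2$2)"
  by (simp add: mat2_def vec_eq_iff forall_2)

lemma mat2_eq_iff: "mat2 a b c d = mat2 a' b' c' d' \<longleftrightarrow> a = a' \<and> b = b' \<and> c = c' \<and> d = d'"
  by (metis mat2_nth)

lemma mat_eq_iff2: "(M::real^2^2) = N \<longleftrightarrow> M$1$1 = N$1$1 \<and> M$1$2 = N$1$2 \<and> M$2$1 = N$2$1 \<and> M$2$2 = N$2$2"
  by (metis mat2_eta)

lemma mat2_mult: "mat2 a b c d ** mat2 e f g h = mat2 (a*e+b*g) (a*f+b*h) (c*e+d*g) (c*f+d*h)"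
  by (simp add: mat2_def matrix_matrix_mult_def vec_eq_iff forall_2 sum_2)

lemma mmult_nth2:
  "((M::real^2^2) ** N) $ i $ j = M$i$1 * N$1$j + M$i$2 * N$2$j"
  by (simp add: matrix_matrix_mult_def sum_2)

lemma mat1_2: "(mat 1 :: real^2^2) = mat2 1 0 0 1"
  by (simp add: mat2_def mat_def vec_eq_iff forall_2)

lemma det_mat2 [simp]: "det (mat2 a b c d) = a*d - b*c"
  by (simp add: det_2)

lemma mat2_neg: "- mat2 a b c d = mat2 (-a) (-b) (-c) (-d)"
  by (simp add: mat2_def vec_eq_iff forall_2)

lemma mat2_scaleR: "r *\<^sub>R mat2 a b c d = mat2 (r*a) (r*b) (r*c) (r*d)"
  by (simp add: mat2_def vec_eq_iff forall_2)

lemma mat2_mv: "(mat2 a b c d *v x) $ 1 = a * x$1 + b * x$2" "(mat2 a b c d *v x) $ 2 = c * x$1 + d * x$2"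
  by (simp_all add: matrix_vector_mult_def sum_2)

definition adj2 :: "real^2^2 \<Rightarrow> real^2^2" where
  "adj2 M = mat2 (M$2$2) (-M$1$2) (-M$2$1) (M$1$1)"

lemma adj2_right: "det M = 1 \<Longrightarrow> M ** adj2 M = mat 1"
  apply (subst (1) mat2_eta[of M])
  by (simp add: adj2_def mat2_mult mat1_2 det_2 mat2_eq_iff algebra_simps)

lemma adj2_left: "det M = 1 \<Longrightarrow> adj2 M ** M = mat 1"
  apply (subst (2) mat2_eta[of M])
  by (simp add: adj2_def mat2_mult mat1_2 det_2 mat2_eq_iff algebra_simps)

lemma matrix_inv_adj2: assumes "det (M::real^2^2) = 1" shows "matrix_inv M = adj2 M"
proof -
  have P: "M ** adj2 M = mat 1 \<and> adj2 M ** M = mat 1" using adj2_left adj2_right assms by blast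
  have "\<And>A'. M ** A' = mat 1 \<and> A' ** M = mat 1 \<Longrightarrow> A' = adj2 M"
    by (metis P matrix_mul_assoc matrix_mul_lid matrix_mul_rid)
  then show ?thesis unfolding matrix_inv_def using P by (metis (mono_tags, lifting) someI_ex)
qed

lemma det_adj2 [simp]: "det (adj2 M) = det M"
  by (simp add: adj2_def det_2)

lemma adj2_mult: "adj2 ((A::real^2^2) ** B) = adj2 B ** adj2 A"
  by (simp add: adj2_def mat2_mult mmult_nth2 mat2_eq_iff algebra_simps)

lemma geo_a_add: "geo_a s ** geo_a t = geo_a (s + t)"
  unfolding geo_a_def mat2_mult mat2_eq_iff
  by (simp add: exp_add[symmetric] diff_divide_distrib add_divide_distrib)

lemma adj2_geo_a: "adj2 (geo_a t) = geo_a (-t)"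
  by (simp add: geo_a_def adj2_def)

lemma geo_a_0: "geo_a 0 = mat 1"
  by (simp add: geo_a_def mat1_2)

lemma det_geo_a [simp]: "det (geo_a t) = 1"
  by (simp add: geo_a_def exp_add[symmetric])

lemma det_mult2: "det ((A::real^2^2) ** B) = det A * det B"
  by (simp add: det_mul)


lemma cancel_r: "det B = 1 \<Longrightarrow> (A::real^2^2) ** B ** adj2 B = A"
  by (metis adj2_right matrix_mul_assoc matrix_mul_rid)
lemma cancel_l: "det B = 1 \<Longrightarrow> (A::real^2^2) ** adj2 B ** B = A"
  by (metis adj2_left matrix_mul_assoc matrix_mul_rid)

lemma tendsto_mat2:
  assumes "(a \<longlongrightarrow> a0) F" "(b \<longlongrightarrow> b0) F" "(c \<longlongrightarrow> c0) F" "(d \<longlongrightarrow> d0) F"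
  shows "((\<lambda>x. mat2 (a x) (b x) (c x) (d x)) \<longlongrightarrow> mat2 a0 b0 c0 d0) F"
proof (rule vec_tendstoI)
  fix i :: 2
  show "((\<lambda>x. mat2 (a x) (b x) (c x) (d x) $ i) \<longlongrightarrow> mat2 a0 b0 c0 d0 $ i) F"
  proof (rule vec_tendstoI)
    fix j :: 2
    show "((\<lambda>x. mat2 (a x) (b x) (c x) (d x) $ i $ j) \<longlongrightarrow> mat2 a0 b0 c0 d0 $ i $ j) F"
      using assms exhaust_2[of i] exhaust_2[of j] by auto
  qed
qed

lemma tendsto_mmult:
  fixes f g :: "'a \<Rightarrow> real^2^2"
  assumes "(f \<longlongrightarrow> A) F" "(g \<longlongrightarrow> B) F"
  shows "((\<lambda>x. f x ** g x) \<longlongrightarrow> A ** B) F"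
proof -
  have e: "\<And>M::real^2^2. M = mat2 (M$1$1) (M$1$2) (M$2$1) (M$2$2)" by (rule mat2_eta)
  have "((\<lambda>x. mat2 ((f x ** g x)$1$1) ((f x ** g x)$1$2) ((f x ** g x)$2$1) ((f x ** g x)$2$2))
      \<longlongrightarrow> mat2 ((A ** B)$1$1) ((A ** B)$1$2) ((A ** B)$2$1) ((A ** B)$2$2)) F"
    unfolding mmult_nth2
    by (intro tendsto_mat2 tendsto_intros assms)
  then show ?thesis by (simp only: mat2_eta[symmetric])
qed

lemma tendsto_adj2:
  assumes "(f \<longlongrightarrow> (A::real^2^2)) F"
  shows "((\<lambda>x. adj2 (f x)) \<longlongrightarrow> adj2 A) F"
  unfolding adj2_def by (intro tendsto_mat2 tendsto_intros assms)

context
  fixes \<Gamma> :: "(real^2^2) set"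
  assumes TF: "torsion_free_fuchsian \<Gamma>"
begin

lemma G_det: "g \<in> \<Gamma> \<Longrightarrow> det g = 1"
  using TF unfolding torsion_free_fuchsian_def SL2_def by auto

lemma G_mult: "g \<in> \<Gamma> \<Longrightarrow> h \<in> \<Gamma> \<Longrightarrow> g ** h \<in> \<Gamma>"
  using TF unfolding torsion_free_fuchsian_def by auto

lemma G_adj: "g \<in> \<Gamma> \<Longrightarrow> adj2 g \<in> \<Gamma>"
  using TF G_det matrix_inv_adj2 unfolding torsion_free_fuchsian_def by metis

lemma G_one: "mat 1 \<in> \<Gamma>"
  using TF unfolding torsion_free_fuchsian_def by auto

lemma G_neg: "g \<in> \<Gamma> \<Longrightarrow> - g \<in> \<Gamma>"
proof -
  assume "g \<in> \<Gamma>"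
  moreover have "- mat 1 \<in> \<Gamma>" using TF unfolding torsion_free_fuchsian_def by auto
  moreover have "(- mat 1) ** g = - g" by (simp add: mat_eq_iff2 mmult_nth2 mat1_2 mat2_neg)
  ultimately show ?thesis using G_mult by metis
qed

lemma G_sign: "s = 1 \<or> s = -1 \<Longrightarrow> g \<in> \<Gamma> \<Longrightarrow> s *\<^sub>R g \<in> \<Gamma>"
  using G_neg by auto

lemma G_mpow: "g \<in> \<Gamma> \<Longrightarrow> mpow g n \<in> \<Gamma>"
  by (induction n) (auto simp: mpow_def G_one G_mult)

lemma G_discrete: "\<not> x islimpt \<Gamma>"
  using TF unfolding torsion_free_fuchsian_def by auto

end

lemma conj_struct:
  fixes p h :: "real^2^2"
  assumes dh: "det h = 1" and dp: "det p = 1" and tr: "\<bar>p$1$1 + p$2$2\<bar> = 2"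
    and fx: "p *v col1 h = c *\<^sub>R col1 h"
  obtains e where "e = 1 \<or> e = -1" "adj2 h ** p ** h = mat2 e ((adj2 h ** p ** h)$1$2) 0 e"
proof -
  let ?X = "adj2 h ** p ** h"
  have f1: "p$1$1 * h$1$1 + p$1$2 * h$2$1 = c * h$1$1"
    using arg_cong[OF fx, of "\<lambda>v. v$1"] by (simp add: matrix_vector_mult_def sum_2 col1_def)
  have f2: "p$2$1 * h$1$1 + p$2$2 * h$2$1 = c * h$2$1"
    using arg_cong[OF fx, of "\<lambda>v. v$2"] by (simp add: matrix_vector_mult_def sum_2 col1_def)
  have x21: "?X$2$1 = 0"
  proof -
    have "?X$2$1 = - h$2$1 * (p$1$1 * h$1$1 + p$1$2 * h$2$1) + h$1$1 * (p$2$1 * h$1$1 + p$2$2 * h$2$1)"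
      unfolding mmult_nth2 adj2_def mat2_nth by (simp add: algebra_simps)
    also have "\<dots> = 0" unfolding f1 f2 by simp
    finally show ?thesis .
  qed
  have dX: "det ?X = 1" using dh dp by (simp add: det_mult2)
  have trX: "?X$1$1 + ?X$2$2 = p$1$1 + p$2$2"
  proof -
    have "?X$1$1 + ?X$2$2 = (p$1$1 + p$2$2) * (h$1$1 * h$2$2 - h$1$2 * h$2$1)"
      unfolding mmult_nth2 adj2_def mat2_nth by (simp add: algebra_simps)
    then show ?thesis using dh by (simp add: det_2)
  qed
  have pr: "?X$1$1 * ?X$2$2 = 1" using dX x21 by (simp add: det_2)
  have sq: "\<And>a b::real. a * b = 1 \<Longrightarrow> \<bar>a + b\<bar> = 2 \<Longrightarrow> a = b"
  proof -
    fix a b :: real assume "a * b = 1" "\<bar>a + b\<bar> = 2"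
    have "(a - b)^2 = \<bar>a+b\<bar>^2 - 4*(a*b)" by (simp add: power2_eq_square algebra_simps)
    then have "(a - b)^2 = 0" using \<open>a * b = 1\<close> \<open>\<bar>a + b\<bar> = 2\<close> by simp
    then show "a = b" by simp
  qed
  have eq: "?X$1$1 = ?X$2$2" using sq[OF pr] tr trX by simp
  have "?X$1$1 * ?X$1$1 = 1" using pr eq by simp
  then have "?X$1$1 = 1 \<or> ?X$1$1 = -1" by (simp add: square_eq_1_iff)
  moreover have "?X = mat2 (?X$1$1) (?X$1$2) 0 (?X$1$1)"
    using eq x21 by (simp add: mat_eq_iff2)
  ultimately show ?thesis using that by blast
qed

lemma conj_geo: "adj2 (geo_a s) ** mat2 e x 0 e ** geo_a s = mat2 e (x * exp (- s)) 0 e"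
proof -
  have "exp (- (s / 2)) * exp (- (s / 2)) = exp (- s)" by (simp add: exp_add[symmetric])
  moreover have "exp (s / 2) * exp (- (s / 2)) = 1" by (simp add: exp_add[symmetric])
  ultimately show ?thesis
    unfolding adj2_geo_a by (simp add: geo_a_def mat2_mult mat2_eq_iff algebra_simps)
qed

lemma mat2_diag_adj: "det L = 1 \<Longrightarrow> L ** mat2 e 0 0 e ** adj2 L = e *\<^sub>R mat 1"
  apply (subst mat2_eta[of L])
  by (simp add: adj2_def mat2_mult mat1_2 mat2_scaleR det_2 mat2_eq_iff algebra_simps)

context
  fixes \<Gamma> :: "(real^2^2) set"
  assumes TF: "torsion_free_fuchsian \<Gamma>"
begin

lemma no_escape:
  assumes pG: "p \<in> \<Gamma>" and par: "parabolic p" and fx: "p *v col1 h = c *\<^sub>R col1 h"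
    and dh: "det h = 1" and \<gamma>: "\<And>n. \<gamma> n \<in> \<Gamma>"
    and texp: "(\<lambda>n. exp (- t n)) \<longlonglongrightarrow> 0"
    and conv: "(\<lambda>n. \<gamma> n ** h ** geo_a (t n)) \<longlonglongrightarrow> L" and dL: "det L = 1"
  shows False
proof -
  have dp: "det p = 1" and tr: "\<bar>p$1$1 + p$2$2\<bar> = 2" and pn: "p \<noteq> mat 1" "p \<noteq> - mat 1"
    using par unfolding parabolic_def SL2_def by auto
  obtain e where e: "e = 1 \<or> e = -1" and X: "adj2 h ** p ** h = mat2 e ((adj2 h ** p ** h)$1$2) 0 e"
    using conj_struct[OF dh dp tr fx] by blast
  define x where "x = (adj2 h ** p ** h)$1$2"
  define M where "M n = \<gamma> n ** h ** geo_a (t n)" for n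
  define q where "q n = \<gamma> n ** p ** adj2 (\<gamma> n)" for n
  have dg: "\<And>n. det (\<gamma> n) = 1" using G_det[OF TF] \<gamma> by blast
  have qM: "q n = M n ** (adj2 (geo_a (t n)) ** (adj2 h ** p ** h) ** geo_a (t n)) ** adj2 (M n)" for n
    unfolding M_def q_def adj2_mult by (simp add: matrix_mul_assoc cancel_r dg dh)
  have qM2: "q n = M n ** mat2 e (x * exp (- t n)) 0 e ** adj2 (M n)" for n
    using qM[of n] X conj_geo unfolding x_def by metis
  have "(\<lambda>n. M n ** mat2 e (x * exp (- t n)) 0 e ** adj2 (M n)) \<longlonglongrightarrow> L ** mat2 e (x * 0) 0 e ** adj2 L"
    unfolding M_def
    by (intro tendsto_mmult tendsto_adj2 conv tendsto_mat2 tendsto_const tendsto_mult texp)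
  moreover have "q = (\<lambda>n. M n ** mat2 e (x * exp (- t n)) 0 e ** adj2 (M n))" using qM2 by (intro ext) simp
  ultimately have qlim: "q \<longlonglongrightarrow> e *\<^sub>R mat 1" using mat2_diag_adj[OF dL, of e] by simp
  define r where "r n = e *\<^sub>R q n" for n
  have "r \<longlonglongrightarrow> e *\<^sub>R (e *\<^sub>R mat 1)" unfolding r_def by (intro tendsto_scaleR tendsto_const qlim)
  then have rlim: "r \<longlonglongrightarrow> mat 1" using e by auto
  have rG: "r n \<in> \<Gamma>" for n
    unfolding r_def q_def using e \<gamma> pG by (intro G_sign[OF TF] G_mult[OF TF] G_adj[OF TF]) auto
  have rn: "r n \<noteq> mat 1" for n
  proof
    assume "r n = mat 1"
    then have "q n = e *\<^sub>R mat 1" unfolding r_def using e by (auto simp: minus_equation_iff)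
    moreover have "p = adj2 (\<gamma> n) ** q n ** \<gamma> n"
      unfolding q_def by (simp add: matrix_mul_assoc cancel_l dg adj2_left)
    ultimately have "p = adj2 (\<gamma> n) ** (e *\<^sub>R mat 1) ** \<gamma> n" by simp
    also have "\<dots> = e *\<^sub>R mat 1"
      by (simp add: matrix_scalar_ac scalar_matrix_assoc[symmetric] adj2_left dg)
    finally show False using e pn by auto
  qed
  have "mat 1 islimpt \<Gamma>"
    unfolding islimpt_sequential using rG rn rlim by blast
  then show False using G_discrete[OF TF] by blast
qed

end

lemma eigen_H:
  fixes \<alpha> \<beta> c d \<sigma> \<mu> \<nu> :: real
  assumes c: "c \<noteq> 0" and dA: "\<alpha> * d - \<beta> * c = 1" and s: "\<sigma> = 1 \<or> \<sigma> = -1"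
    and mn: "\<mu> * \<nu> = 1" and tr: "\<sigma> * (\<alpha> + d) = \<mu> + \<nu>" and gt: "\<nu> < \<mu>"
  defines "r \<equiv> sqrt (\<mu> - \<nu>)"
  defines "H \<equiv> mat2 ((\<sigma>*\<nu> - d)/(c*r)) (-\<sigma>*(\<sigma>*\<mu> - d)/r) (1/r) (-\<sigma>*c/r)"
  shows "det H = 1" "mat2 \<alpha> \<beta> c d ** H = \<sigma> *\<^sub>R (H ** mat2 \<nu> 0 0 \<mu>)"
proof -
  have r: "r > 0" "r * r = \<mu> - \<nu>" using gt unfolding r_def by auto
  have ss: "\<sigma> * \<sigma> = 1" using s by auto
  have E: "\<alpha> * (\<sigma>*x - d) + \<beta> * c = \<sigma>*x * (\<sigma>*x - d)" if "x = \<mu> \<or> x = \<nu>" for x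
  proof -
    have "\<alpha> * (\<sigma>*x - d) + \<beta> * c - \<sigma>*x * (\<sigma>*x - d) = \<sigma>*x*(\<alpha> + d) - (\<sigma>*\<sigma>)*x*x - (\<alpha> * d - \<beta> * c)"
      by (simp add: algebra_simps)
    also have "\<dots> = x * (\<sigma> * (\<alpha> + d)) - x * x - 1" using ss dA by (simp add: algebra_simps)
    also have "\<dots> = 0" using that mn unfolding tr by (auto simp: algebra_simps)
    finally show ?thesis by simp
  qed
  have "det H = (- \<sigma> * (\<sigma> * \<nu> - d) + \<sigma> * (\<sigma>*\<mu> - d)) / (r * r)"
    unfolding H_def using c r by (simp add: field_simps)
  also have "\<dots> = 1" using r ss gt by (simp add: algebra_simps)
  finally show "det H = 1" .
  show "mat2 \<alpha> \<beta> c d ** H = \<sigma> *\<^sub>R (H ** mat2 \<nu> 0 0 \<mu>)"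
    unfolding H_def mat2_mult mat2_scaleR mat2_eq_iff
  proof (intro conjI)
    show "\<alpha> * ((\<sigma> * \<nu> - d) / (c * r)) + \<beta> * (1 / r) = \<sigma> * ((\<sigma> * \<nu> - d) / (c * r) * \<nu> + - \<sigma> * (\<sigma> * \<mu> - d) / r * 0)"
      using E[of \<nu>] c r by (simp add: field_simps)
    show "\<alpha> * (- \<sigma> * (\<sigma> * \<mu> - d) / r) + \<beta> * (- \<sigma> * c / r) = \<sigma> * ((\<sigma> * \<nu> - d) / (c * r) * 0 + - \<sigma> * (\<sigma> * \<mu> - d) / r * \<mu>)"
    proof -
      have "\<alpha> * (- \<sigma> * (\<sigma> * \<mu> - d) / r) + \<beta> * (- \<sigma> * c / r) = -\<sigma>/r * (\<alpha> * (\<sigma>*\<mu> - d) + \<beta> * c)"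
        using r by (simp add: field_simps)
      also have "\<dots> = -\<sigma>/r * (\<sigma>*\<mu> * (\<sigma>*\<mu> - d))" using E[of \<mu>] by simp
      also have "\<dots> = \<sigma> * ((\<sigma> * \<nu> - d) / (c * r) * 0 + - \<sigma> * (\<sigma> * \<mu> - d) / r * \<mu>)"
        using r c by (simp add: field_simps)
      finally show ?thesis .
    qed
    show "c * ((\<sigma> * \<nu> - d) / (c * r)) + d * (1 / r) = \<sigma> * (1 / r * \<nu> + - \<sigma> * c / r * 0)"
      using c r ss by (simp add: field_simps)
    show "c * (- \<sigma> * (\<sigma> * \<mu> - d) / r) + d * (- \<sigma> * c / r) = \<sigma> * (1 / r * 0 + - \<sigma> * c / r * \<mu>)"
      using c r ss by (simp add: field_simps)
  qed
qed

lemma mpow_Suc: "mpow g (Suc n) = g ** mpow g n"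
  by (simp add: mpow_def)

lemma periodic_pow:
  assumes "g ** h' ** geo_a l = h'"
  shows "mpow g n ** h' ** geo_a (real n * l) = h'"
proof (induction n)
  case 0
  then show ?case by (simp add: mpow_def geo_a_0)
next
  case (Suc n)
  have ge: "geo_a (real (Suc n) * l) = geo_a (real n * l) ** geo_a l"
    by (simp add: geo_a_add algebra_simps)
  have "mpow g (Suc n) ** h' ** geo_a (real (Suc n) * l) = g ** (mpow g n ** h' ** geo_a (real n * l)) ** geo_a l"
    by (simp only: ge mpow_Suc matrix_mul_assoc)
  also have "\<dots> = h'" using Suc assms by (simp add: matrix_mul_assoc)
  finally show ?case .
qed

context
  fixes \<Gamma> :: "(real^2^2) set"
  assumes TF: "torsion_free_fuchsian \<Gamma>"
begin

lemma periodic_nw: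
  assumes gG: "g \<in> \<Gamma>" and dh: "det h' = 1" and l: "l > 0" and per: "g ** h' ** geo_a l = h'"
  shows "nonwandering \<Gamma> h'"
  unfolding nonwandering_def
proof (intro conjI allI impI)
  show "h' \<in> SL2" using dh by (simp add: SL2_def)
  fix U :: "(real^2^2) set" and T :: real
  assume U: "open U \<and> h' \<in> U"
  obtain n :: nat where n: "T < real n * l" using reals_Archimedean3[OF l] by blast
  have "mpow g n \<in> \<Gamma>" using G_mpow[OF TF gG] .
  moreover have "mpow g n ** h' ** geo_a (real n * l) \<in> U" using periodic_pow[OF per] U by simp
  moreover have "h' \<in> U \<inter> SL2" using U dh by (simp add: SL2_def)
  ultimately show "\<exists>t>T. \<exists>\<gamma>\<in>\<Gamma>. \<exists>x\<in>U \<inter> SL2. \<gamma> ** x ** geo_a t \<in> U" using n by blast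
qed

end

context
  fixes \<Gamma> :: "(real^2^2) set"
  assumes TF: "torsion_free_fuchsian \<Gamma>"
begin

lemma construct:
  assumes kd: "det k = 1" and PG: "P \<in> \<Gamma>" and Pk: "P ** k = k ** mat2 1 lam 0 1"
    and lam: "lam > 0" and g0G: "g0 \<in> \<Gamma>" and c0: "(adj2 k ** g0 ** k)$2$1 \<noteq> 0" and R: "R > 0"
  shows "\<exists>g h' l. g \<in> \<Gamma> \<and> det h' = 1 \<and> l > 0 \<and> g ** h' ** geo_a l = h' \<and>
            ((adj2 k ** h')$2$1)^2 + ((adj2 k ** h')$2$2)^2 < 1/R"
proof -
  define G where "G = adj2 k ** g0 ** k"
  define a where "a = G$1$1"
  define b where "b = G$1$2"
  define c where "c = G$2$1"
  define d where "d = G$2$2"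
  have c: "c \<noteq> 0" using c0 unfolding c_def G_def .
  have Geq: "G = mat2 a b c d" unfolding a_def b_def c_def d_def by (rule mat2_eta)
  have dG: "det G = 1" unfolding G_def using G_det[OF TF g0G] kd by (simp add: det_mult2)
  then have dabcd: "a * d - b * c = 1" using Geq by simp
  have Gk: "g0 ** k = k ** G" unfolding G_def by (simp add: matrix_mul_assoc adj2_right kd)
  have Pm: "mpow P m ** k = k ** mat2 1 (real m * lam) 0 1" for m
  proof (induction m)
    case 0 then show ?case by (simp add: mpow_def mat1_2[symmetric])
  next
    case (Suc m)
    have "mpow P (Suc m) ** k = P ** k ** mat2 1 (real m * lam) 0 1"
      using Suc by (simp add: mpow_Suc matrix_mul_assoc[symmetric])
    also have "\<dots> = k ** mat2 1 (real (Suc m) * lam) 0 1"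
      using Pk by (simp add: matrix_mul_assoc[symmetric] mat2_mult algebra_simps)
    finally show ?case .
  qed
  define Y where "Y = R * (1 + c^2)"
  have Y: "Y > 0" unfolding Y_def using R by (simp add: add_pos_nonneg)
  have lc: "lam * \<bar>c\<bar> > 0" using lam c by simp
  obtain m :: nat where m: "\<bar>a + d\<bar> + 2 + Y < real m * (lam * \<bar>c\<bar>)"
    using reals_Archimedean3[OF lc] by blast
  define T where "T = a + d + real m * lam * c"
  have "\<bar>real m * lam * c\<bar> = real m * (lam * \<bar>c\<bar>)" using lam by (simp add: abs_mult)
  then have TY: "2 + Y < \<bar>T\<bar>" using m unfolding T_def by linarith
  define \<sigma> :: real where "\<sigma> = (if T > 0 then 1 else -1)"
  have s: "\<sigma> = 1 \<or> \<sigma> = -1" unfolding \<sigma>_def by auto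
  have sT: "\<sigma> * T = \<bar>T\<bar>" unfolding \<sigma>_def by auto
  have T2: "(2 + Y)^2 < T^2"
    using power_strict_mono[of "2+Y" "\<bar>T\<bar>" 2] TY Y by simp
  define Sq where "Sq = sqrt (T^2 - 4)"
  have T4: "4 \<le> T^2"
  proof -
    have "Y*Y + (4 + Y*4) < T*T" using T2 by (simp add: power2_eq_square algebra_simps)
    moreover have "0 \<le> Y*Y" by simp
    ultimately have "4 \<le> T*T" using Y by linarith
    then show ?thesis by (simp add: power2_eq_square)
  qed
  have Sq2: "Sq * Sq = T^2 - 4" unfolding Sq_def using T4 by simp
  have "Y^2 < T^2 - 4" using T2 Y by (simp add: power2_eq_square algebra_simps)
  then have SqY: "Y < Sq" unfolding Sq_def by (rule real_less_rsqrt)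
  define \<mu> where "\<mu> = (\<bar>T\<bar> + Sq)/2"
  define \<nu> where "\<nu> = (\<bar>T\<bar> - Sq)/2"
  have mn: "\<mu> * \<nu> = 1" unfolding \<mu>_def \<nu>_def
  proof -
    have "(\<bar>T\<bar> + Sq) / 2 * ((\<bar>T\<bar> - Sq) / 2) = (\<bar>T\<bar>*\<bar>T\<bar> - Sq*Sq)/4" by (simp add: algebra_simps)
    also have "\<dots> = 1" using Sq2 by (simp add: power2_eq_square)
    finally show "(\<bar>T\<bar> + Sq) / 2 * ((\<bar>T\<bar> - Sq) / 2) = 1" .
  qed
  have mu1: "\<mu> > 1" unfolding \<mu>_def using TY Y SqY by simp
  have nm: "\<nu> < \<mu>" unfolding \<mu>_def \<nu>_def using SqY Y by simp
  have mmn: "\<mu> - \<nu> = Sq" unfolding \<mu>_def \<nu>_def by (simp add: field_simps)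
  define \<alpha> where "\<alpha> = a + real m * lam * c"
  define \<beta> where "\<beta> = b + real m * lam * d"
  have A: "mat2 1 (real m * lam) 0 1 ** G = mat2 \<alpha> \<beta> c d"
    unfolding Geq \<alpha>_def \<beta>_def by (simp add: mat2_mult algebra_simps)
  have dA: "\<alpha> * d - \<beta> * c = 1" unfolding \<alpha>_def \<beta>_def using dabcd by (simp add: algebra_simps)
  have trA: "\<sigma> * (\<alpha> + d) = \<mu> + \<nu>" unfolding \<mu>_def \<nu>_def \<alpha>_def using sT unfolding T_def by (simp add: field_simps)
  define r where "r = sqrt (\<mu> - \<nu>)"
  define H where "H = mat2 ((\<sigma>*\<nu> - d)/(c*r)) (-\<sigma>*(\<sigma>*\<mu> - d)/r) (1/r) (-\<sigma>*c/r)"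
  have dH: "det H = 1" and AH: "mat2 \<alpha> \<beta> c d ** H = \<sigma> *\<^sub>R (H ** mat2 \<nu> 0 0 \<mu>)"
    using eigen_H[OF c dA s mn trA nm] unfolding H_def r_def by auto
  define l where "l = 2 * ln \<mu>"
  have l: "l > 0" unfolding l_def using mu1 by simp
  have e1: "exp (l/2) = \<mu>" unfolding l_def using mu1 by simp
  have e2: "exp (- (l/2)) = \<nu>" using e1 mn mu1 by (simp add: exp_minus field_simps)
  have ga: "geo_a (- l) = mat2 \<nu> 0 0 \<mu>" unfolding geo_a_def using e1 e2 by simp
  define g1 where "g1 = mpow P m ** g0"
  have g1G: "g1 \<in> \<Gamma>" unfolding g1_def using G_mpow[OF TF PG] g0G G_mult[OF TF] by blast
  have g1k: "g1 ** k = k ** mat2 \<alpha> \<beta> c d"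
    unfolding g1_def A[symmetric]
    by (simp add: matrix_mul_assoc[symmetric] Gk) (simp add: matrix_mul_assoc Pm)
  define h' where "h' = k ** H"
  define g where "g = \<sigma> *\<^sub>R g1"
  have gG: "g \<in> \<Gamma>" unfolding g_def using G_sign[OF TF s g1G] .
  have dh': "det h' = 1" unfolding h'_def using kd dH by (simp add: det_mult2)
  have ss: "\<sigma> * \<sigma> = 1" using s by auto
  have "g ** h' ** geo_a l = \<sigma> *\<^sub>R ((g1 ** k) ** H ** geo_a l)"
    unfolding g_def h'_def by (simp add: scalar_matrix_assoc[symmetric] matrix_mul_assoc)
  also have "\<dots> = \<sigma> *\<^sub>R (k ** (mat2 \<alpha> \<beta> c d ** H) ** geo_a l)"
    unfolding g1k by (simp add: matrix_mul_assoc)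
  also have "\<dots> = (\<sigma> * \<sigma>) *\<^sub>R (k ** (H ** (geo_a (- l) ** geo_a l)))"
    unfolding AH ga[symmetric] by (simp add: matrix_scalar_ac scalar_matrix_assoc[symmetric] matrix_mul_assoc)
  also have "\<dots> = h'" unfolding ss h'_def by (simp add: geo_a_add geo_a_0)
  finally have per: "g ** h' ** geo_a l = h'" .
  have kh: "adj2 k ** h' = H" unfolding h'_def by (simp add: matrix_mul_assoc adj2_left kd)
  have r: "r > 0" "r * r = Sq" unfolding r_def using nm mmn by auto
  have "((adj2 k ** h')$2$1)^2 + ((adj2 k ** h')$2$2)^2 = (1 + c^2) / Sq"
  proof -
    have sc: "\<sigma>*(\<sigma>*(c*c)) = c*c" using ss by (metis mult.assoc mult_1)
    show ?thesis unfolding kh H_def using r by (simp add: power2_eq_square field_simps sc add_divide_distrib)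
  qed
  also have "\<dots> < 1 / R" using SqY R Y unfolding Y_def by (simp add: field_simps)
  finally show ?thesis using gG dh' l per by blast
qed

end

lemma cont_sandwich: "continuous_on UNIV (\<lambda>X::real^2^2. (A::real^2^2) ** X ** (B::real^2^2))"
  unfolding continuous_on_def
proof
  fix x :: "real^2^2"
  have "((\<lambda>X. A ** X) \<longlongrightarrow> A ** x) (at x within UNIV)"
    using tendsto_mmult[of "\<lambda>_. A" A _ "\<lambda>X. X" x] by (simp add: tendsto_ident_at)
  then show "((\<lambda>X. A ** X ** B) \<longlongrightarrow> A ** x ** B) (at x within UNIV)"
    using tendsto_mmult[of "\<lambda>X. A ** X" _ _ "\<lambda>_. B" B] by simp
qed

lemma cont_bottom: "continuous_on UNIV (\<lambda>X::real^2^2. (((A::real^2^2) ** X)$2$1)^2 + ((A ** X)$2$2)^2)"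
proof -
  have "((\<lambda>X. A ** X) \<longlongrightarrow> A ** x) (at x)" for x :: "real^2^2"
    using tendsto_mmult[of "\<lambda>_. A" A _ "\<lambda>X. X" x] by (simp add: tendsto_ident_at)
  then show ?thesis unfolding continuous_on_def
    by (intro ballI tendsto_intros) auto
qed

lemma mob_mult:
  assumes "complex_of_real (B$2$1) * z + complex_of_real (B$2$2) \<noteq> 0"
  shows "mob (A ** B) z = mob A (mob B z)"
proof -
  define w where "w = complex_of_real (B$2$1) * z + complex_of_real (B$2$2)"
  define P where "P = complex_of_real (B$1$1) * z + complex_of_real (B$1$2)"
  have w: "w \<noteq> 0" using assms unfolding w_def .
  have "mob (A ** B) z = (of_real (A$1$1) * P + of_real (A$1$2) * w) / (of_real (A$2$1) * P + of_real (A$2$2) * w)"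
    unfolding mob_def mmult_nth2 P_def w_def by (simp add: algebra_simps)
  also have "\<dots> = ((of_real (A$1$1) * P + of_real (A$1$2) * w) / w) / ((of_real (A$2$1) * P + of_real (A$2$2) * w) / w)"
    using w by simp
  also have "\<dots> = mob A (P / w)"
    unfolding mob_def using w by (simp add: add_divide_distrib)
  also have "P / w = mob B z" unfolding mob_def P_def w_def ..
  finally show ?thesis .
qed

lemma SL2_row2: "det (B::real^2^2) = 1 \<Longrightarrow> complex_of_real (B$2$1) * \<i> + complex_of_real (B$2$2) \<noteq> 0"
  by (auto simp: complex_eq_iff det_2)

lemma mob_i: assumes "det (N::real^2^2) = 1"
  shows "Im (mob N \<i>) = 1 / ((N$2$1)^2 + (N$2$2)^2)"
  using assms by (simp add: mob_def Im_divide det_2 power2_eq_square algebra_simps)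

lemma mv_col1: "(g::real^2^2) *v col1 k = col1 (g ** k)"
  by (simp add: col1_def matrix_vector_mult_def matrix_matrix_mult_def vec_eq_iff)

lemma col1_nth [simp]: "col1 k $ i = k $ i $ 1"
  by (simp add: col1_def)

lemma adj2_adj2 [simp]: "adj2 (adj2 M) = M"
  by (simp add: adj2_def mat2_eq_iff mat_eq_iff2)

lemma elem_line:
  assumes "(v::real^2) \<noteq> 0" and "\<And>g. g \<in> \<Gamma> \<Longrightarrow> \<exists>a. g *v v = a *\<^sub>R v \<and> a \<noteq> 0"
  shows "elementary \<Gamma>"
  unfolding elementary_def
proof (rule disjI2, rule exI[of _ v], rule conjI[OF assms(1)])
  have "(\<lambda>g. {c *\<^sub>R (g *v v) | c. True}) ` \<Gamma> \<subseteq> {{c *\<^sub>R v | c. True}}"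
  proof
    fix S assume "S \<in> (\<lambda>g. {c *\<^sub>R (g *v v) | c. True}) ` \<Gamma>"
    then obtain g where g: "g \<in> \<Gamma>" "S = {c *\<^sub>R (g *v v) | c. True}" by blast
    obtain a where a: "g *v v = a *\<^sub>R v" "a \<noteq> 0" using assms(2)[OF g(1)] by blast
    have "{c *\<^sub>R (g *v v) | c. True} = {c *\<^sub>R v | c. True}"
    proof (rule set_eqI, rule iffI)
      fix x assume "x \<in> {c *\<^sub>R (g *v v) | c. True}"
      then obtain c where "x = c *\<^sub>R (g *v v)" by blast
      then have "x = (c * a) *\<^sub>R v" using a by simp
      then show "x \<in> {c *\<^sub>R v | c. True}" by blast
    next
      fix x assume "x \<in> {c *\<^sub>R v | c. True}"
      then obtain c where "x = c *\<^sub>R v" by blast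
      then have "x = (c / a) *\<^sub>R (g *v v)" using a by simp
      then show "x \<in> {c *\<^sub>R (g *v v) | c. True}" by blast
    qed
    then show "S \<in> {{c *\<^sub>R v | c. True}}" using g by simp
  qed
  then show "finite ((\<lambda>g. {c *\<^sub>R (g *v v) | c. True}) ` \<Gamma>)" by (rule finite_subset) simp
qed

context
  fixes \<Gamma> :: "(real^2^2) set"
  assumes TF: "torsion_free_fuchsian \<Gamma>"
begin

lemma setup_data:
  assumes nel: "\<not> elementary \<Gamma>" and pG: "p \<in> \<Gamma>" and par: "parabolic p"
  obtains k P lam g0 s where "det k = 1" "P \<in> \<Gamma>" "P ** k = k ** mat2 1 lam 0 1" "lam > 0"
    "g0 \<in> \<Gamma>" "(adj2 k ** g0 ** k)$2$1 \<noteq> 0" "p *v col1 k = s *\<^sub>R col1 k"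
proof -
  have dp: "p$1$1 * p$2$2 - p$1$2 * p$2$1 = 1" and tr: "\<bar>p$1$1 + p$2$2\<bar> = 2"
    and pn: "p \<noteq> mat 1" "p \<noteq> - mat 1"
    using par unfolding parabolic_def SL2_def by (auto simp: det_2)
  define s where "s = (p$1$1 + p$2$2) / 2"
  have s: "s = 1 \<or> s = -1" using tr unfolding s_def by (auto simp: abs_if split: if_splits)
  have ss: "s * s = 1" using s by auto
  define v1 where "v1 = (if p$1$2 \<noteq> 0 then p$1$2 else 0)"
  define v2 where "v2 = (if p$1$2 \<noteq> 0 then s - p$1$1 else 1)"
  have ev1: "p$1$1 * v1 + p$1$2 * v2 = s * v1" and ev2: "p$2$1 * v1 + p$2$2 * v2 = s * v2"
  proof -
    have "p$1$1 * v1 + p$1$2 * v2 = s * v1 \<and> p$2$1 * v1 + p$2$2 * v2 = s * v2"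
    proof (cases "p$1$2 = 0")
      case True
      then have pr: "p$1$1 * p$2$2 = 1" using dp by simp
      have "(p$1$1 - p$2$2)^2 = \<bar>p$1$1 + p$2$2\<bar>^2 - 4 * (p$1$1 * p$2$2)"
        by (simp add: power2_eq_square algebra_simps)
      then have "(p$1$1 - p$2$2)^2 = 0" using pr tr by simp
      then have "p$2$2 = s" unfolding s_def by simp
      then show ?thesis using True unfolding v1_def v2_def by simp
    next
      case False
      have p22: "p$2$2 = 2 * s - p$1$1" unfolding s_def by (simp add: field_simps)
      have "p$2$1 * p$1$2 + p$2$2 * (s - p$1$1) - s * (s - p$1$1)
          = - (p$1$1 * p$2$2 - p$1$2 * p$2$1) + s * s"
        unfolding p22 by (simp add: algebra_simps)
      also have "\<dots> = 0" using dp ss by simp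
      finally show ?thesis using False unfolding v1_def v2_def by (simp add: algebra_simps)
    qed
    then show "p$1$1 * v1 + p$1$2 * v2 = s * v1" "p$2$1 * v1 + p$2$2 * v2 = s * v2" by auto
  qed
  define N where "N = v1^2 + v2^2"
  have N: "N > 0" unfolding N_def v1_def v2_def by (auto simp: add_pos_nonneg)
  define k where "k = mat2 v1 (-v2/N) v2 (v1/N)"
  have dk: "det k = 1" unfolding k_def using N by (auto simp add: N_def power2_eq_square add_divide_distrib[symmetric])
  have fx: "p *v col1 k = s *\<^sub>R col1 k"
    using ev1 ev2 unfolding k_def by (simp add: vec_eq_iff forall_2 matrix_vector_mult_def sum_2)
  have dp': "det p = 1" using dp by (simp add: det_2)
  obtain e where e: "e = 1 \<or> e = -1" and X: "adj2 k ** p ** k = mat2 e ((adj2 k ** p ** k)$1$2) 0 e"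
    using conj_struct[OF dk dp' tr fx] by blast
  define x where "x = (adj2 k ** p ** k)$1$2"
  have ee: "e * e = 1" using e by auto
  have x: "x \<noteq> 0"
  proof
    assume "x = 0"
    then have "adj2 k ** p ** k = e *\<^sub>R mat 1" using X unfolding x_def by (simp add: mat1_2 mat2_scaleR)
    then have "k ** (adj2 k ** p ** k) ** adj2 k = k ** (e *\<^sub>R mat 1) ** adj2 k" by simp
    then have "p = e *\<^sub>R mat 1"
      by (simp add: matrix_mul_assoc adj2_right dk matrix_scalar_ac scalar_matrix_assoc[symmetric] cancel_r)
    then show False using e pn by auto
  qed
  define P0 where "P0 = e *\<^sub>R p"
  have P0G: "P0 \<in> \<Gamma>" unfolding P0_def using G_sign[OF TF e pG] .
  have XP0: "adj2 k ** P0 ** k = mat2 1 (e * x) 0 1"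
  proof -
    have "adj2 k ** P0 ** k = e *\<^sub>R (adj2 k ** p ** k)"
      unfolding P0_def by (simp add: matrix_scalar_ac scalar_matrix_assoc[symmetric])
    also have "\<dots> = e *\<^sub>R mat2 e x 0 e" using X unfolding x_def by simp
    also have "\<dots> = mat2 1 (e * x) 0 1" using ee by (simp add: mat2_scaleR)
    finally show ?thesis .
  qed
  obtain P lam where PG: "P \<in> \<Gamma>" and lam: "lam > 0" and XP: "adj2 k ** P ** k = mat2 1 lam 0 1"
  proof (cases "e * x > 0")
    case True then show ?thesis using that P0G XP0 by blast
  next
    case False
    have "e * x \<noteq> 0" using x e by auto
    then have l: "- (e * x) > 0" using False by linarith
    have "adj2 k ** adj2 P0 ** k = adj2 (adj2 k ** P0 ** k)" by (simp add: adj2_mult matrix_mul_assoc)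
    also have "\<dots> = mat2 1 (- (e * x)) 0 1" unfolding XP0 by (simp add: adj2_def)
    finally show ?thesis using that[OF G_adj[OF TF P0G] l] by blast
  qed
  have Pk: "P ** k = k ** mat2 1 lam 0 1"
  proof -
    have "k ** (adj2 k ** P ** k) = P ** k" by (simp add: matrix_mul_assoc adj2_right dk)
    then show ?thesis using XP by simp
  qed
  obtain g0 where g0: "g0 \<in> \<Gamma>" "(adj2 k ** g0 ** k)$2$1 \<noteq> 0"
  proof (rule ccontr)
    assume "\<not> thesis"
    then have all: "\<And>g. g \<in> \<Gamma> \<Longrightarrow> (adj2 k ** g ** k)$2$1 = 0" using that by blast
    have "elementary \<Gamma>"
    proof (rule elem_line)
      show "col1 k \<noteq> 0" using N unfolding k_def N_def by (auto simp: vec_eq_iff forall_2)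
      fix g assume gG: "g \<in> \<Gamma>"
      define G where "G = adj2 k ** g ** k"
      have G21: "G$2$1 = 0" using all[OF gG] unfolding G_def .
      have "det G = 1" unfolding G_def using dk G_det[OF TF gG] by (simp add: det_mult2)
      then have G11: "G$1$1 \<noteq> 0" using G21 by (auto simp: det_2)
      have "g ** k = k ** G" unfolding G_def by (simp add: matrix_mul_assoc adj2_right dk)
      then have "g *v col1 k = col1 (k ** G)" by (simp add: mv_col1)
      also have "\<dots> = G$1$1 *\<^sub>R col1 k" using G21 by (simp add: vec_eq_iff forall_2 mmult_nth2)
      finally show "\<exists>a. g *v col1 k = a *\<^sub>R col1 k \<and> a \<noteq> 0" using G11 by blast
    qed
    then show False using nel by blast
  qed
  show ?thesis using that[OF dk PG Pk lam g0 fx] .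
qed

end

lemma sq_lim: "(\<lambda>n. c * inverse (real (Suc n))) \<longlonglongrightarrow> 0"
  using tendsto_mult[OF tendsto_const[of c] LIMSEQ_inverse_real_of_nat] by simp

lemma squeeze0:
  fixes g h :: "nat \<Rightarrow> real"
  assumes "\<And>n. 0 \<le> g n" "\<And>n. g n \<le> h n" "h \<longlonglongrightarrow> 0"
  shows "g \<longlonglongrightarrow> 0"
  by (rule tendsto_sandwich[of "\<lambda>_. 0" g sequentially h 0]) (use assms in auto)

theorem mainTheorem13:
  fixes \<Gamma> :: "(real^2^2) set" and h :: "real^2^2"
  assumes "torsion_free_fuchsian \<Gamma>"
    and "\<not> elementary \<Gamma>"
    and "\<exists>p\<in>\<Gamma>. parabolic p"
    and "h \<in> SL2"
    and "closure (fwd_orbit_lift \<Gamma> h) = {x. nonwandering \<Gamma> x}"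
  shows "cusp_recurrent \<Gamma> h"
proof -
  note TF = assms(1)
  obtain p where pG: "p \<in> \<Gamma>" and par: "parabolic p" using assms(3) by blast
  obtain k P lam g0 s where dk: "det k = 1" and PG: "P \<in> \<Gamma>" and Pk: "P ** k = k ** mat2 1 lam 0 1"
    and lam: "lam > 0" and g0G: "g0 \<in> \<Gamma>" and c0: "(adj2 k ** g0 ** k)$2$1 \<noteq> 0"
    and fxk: "p *v col1 k = s *\<^sub>R col1 k"
    using setup_data[OF TF assms(2) pG par] by blast
  have dh: "det h = 1" using assms(4) by (simp add: SL2_def)
  define f where "f X = ((adj2 k ** X)$2$1)^2 + ((adj2 k ** X)$2$2)^2" for X :: "real^2^2"
  have per_nw: "\<exists>g h' l. g \<in> \<Gamma> \<and> det h' = 1 \<and> l > 0 \<and> g ** h' ** geo_a l = h' \<and> f h' < 1/R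
      \<and> h' \<in> closure (fwd_orbit_lift \<Gamma> h)" if R: "R > 0" for R
  proof -
    obtain g h' l where *: "g \<in> \<Gamma>" "det h' = 1" "l > 0" "g ** h' ** geo_a l = h'" "f h' < 1/R"
      using construct[OF TF dk PG Pk lam g0G c0 R] unfolding f_def by blast
    have "nonwandering \<Gamma> h'" using periodic_nw[OF TF *(1-4)] .
    then have "h' \<in> closure (fwd_orbit_lift \<Gamma> h)" using assms(5) by simp
    then show ?thesis using * by blast
  qed
  have hit: "\<exists>\<gamma> t. \<gamma> \<in> \<Gamma> \<and> t \<ge> 0 \<and> \<gamma> ** h ** geo_a t \<in> V"
    if "open V" "x \<in> V" "x \<in> closure (fwd_orbit_lift \<Gamma> h)" for V x
  proof -
    have "fwd_orbit_lift \<Gamma> h \<inter> V \<noteq> {}" using that unfolding closure_iff_nhds_not_empty by blast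
    then show ?thesis unfolding fwd_orbit_lift_def by blast
  qed
  have notpar: "\<not> parabolic_fixed_point \<Gamma> (col1 h)"
  proof
    assume "parabolic_fixed_point \<Gamma> (col1 h)"
    then obtain p' c where p'G: "p' \<in> \<Gamma>" and par': "parabolic p'" and fx: "p' *v col1 h = c *\<^sub>R col1 h"
      unfolding parabolic_fixed_point_def fixes_bdry_def by blast
    obtain g h' l where g: "g \<in> \<Gamma>" and dh': "det h' = 1" and l: "l > 0" and per: "g ** h' ** geo_a l = h'"
      and hcl: "h' \<in> closure (fwd_orbit_lift \<Gamma> h)"
      using per_nw[of 1] by auto
    have "\<exists>\<gamma> t. \<gamma> \<in> \<Gamma> \<and> t \<ge> 0 \<and> dist (mpow g j ** (\<gamma> ** h ** geo_a t) ** geo_a (real j * l)) h' < 1 / (real j + 1)" for j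
    proof -
      define V where "V = {X. dist (mpow g j ** X ** geo_a (real j * l)) h' < 1 / (real j + 1)}"
      have "open V" unfolding V_def
        by (intro open_Collect_less continuous_on_dist cont_sandwich continuous_on_const)
      moreover have "h' \<in> V" unfolding V_def using periodic_pow[OF per, of j] by simp
      ultimately show ?thesis using hit[OF _ _ hcl] unfolding V_def by blast
    qed
    then obtain \<gamma> t where \<gamma>: "\<And>j. \<gamma> j \<in> \<Gamma>" and t: "\<And>j. t j \<ge> 0"
      and d: "\<And>j. dist (mpow g j ** (\<gamma> j ** h ** geo_a (t j)) ** geo_a (real j * l)) h' < 1 / (real j + 1)"
      by metis
    define \<gamma>' where "\<gamma>' j = mpow g j ** \<gamma> j" for j
    define t' where "t' j = t j + real j * l" for j
    have \<gamma>'G: "\<gamma>' j \<in> \<Gamma>" for j unfolding \<gamma>'_def using G_mpow[OF TF g] \<gamma> G_mult[OF TF] by blast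
    have eq: "\<gamma>' j ** h ** geo_a (t' j) = mpow g j ** (\<gamma> j ** h ** geo_a (t j)) ** geo_a (real j * l)" for j
      unfolding \<gamma>'_def t'_def geo_a_add[symmetric] by (simp add: matrix_mul_assoc)
    have conv: "(\<lambda>j. \<gamma>' j ** h ** geo_a (t' j)) \<longlonglongrightarrow> h'"
    proof (rule tendsto_dist_iff[THEN iffD2], rule squeeze0)
      show "0 \<le> dist (\<gamma>' n ** h ** geo_a (t' n)) h'" for n by simp
      show "dist (\<gamma>' n ** h ** geo_a (t' n)) h' \<le> 1 * inverse (real (Suc n))" for n
        using d[of n] unfolding eq by (simp add: inverse_eq_divide add.commute)
      show "(\<lambda>n. 1 * inverse (real (Suc n))) \<longlonglongrightarrow> 0" by (rule sq_lim)
    qed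
    have texp: "(\<lambda>j. exp (- t' j)) \<longlonglongrightarrow> 0"
    proof (rule squeeze0)
      show "0 \<le> exp (- t' n)" for n by simp
      show "exp (- t' n) \<le> exp (- l) ^ n" for n
      proof -
        have "exp (- t' n) \<le> exp (real n * (- l))" unfolding t'_def using t[of n] by simp
        moreover have "exp (real n * (- l)) = exp (- l) ^ n" by (rule exp_of_nat_mult)
        ultimately show ?thesis by linarith
      qed
      show "(\<lambda>n. exp (- l) ^ n) \<longlonglongrightarrow> 0" using l by (intro LIMSEQ_power_zero) simp
    qed
    show False using no_escape[OF TF p'G par' fx dh \<gamma>'G texp conv dh'] .
  qed
  \<comment> \<open>Part 2: orbit points arbitrarily deep in the cusp\<close>
  have "\<exists>\<gamma> t. \<gamma> \<in> \<Gamma> \<and> t \<ge> 0 \<and> f (\<gamma> ** h ** geo_a t) < 1 / (real n + 1)" for n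
  proof -
    have R: "real n + 1 > 0" by simp
    obtain h' where "f h' < 1 / (real n + 1)" "h' \<in> closure (fwd_orbit_lift \<Gamma> h)"
      using per_nw[OF R] by blast
    moreover have "open {X. f X < 1 / (real n + 1)}" unfolding f_def
      by (intro open_Collect_less cont_bottom continuous_on_const)
    ultimately show ?thesis using hit[of "{X. f X < 1 / (real n + 1)}"] by blast
  qed
  then obtain \<gamma> \<tau> where \<gamma>: "\<And>n. \<gamma> n \<in> \<Gamma>" and \<tau>: "\<And>n. \<tau> n \<ge> 0"
    and fsmall: "\<And>n. f (\<gamma> n ** h ** geo_a (\<tau> n)) < 1 / (real n + 1)"
    by metis
  define M where "M n = \<gamma> n ** h ** geo_a (\<tau> n)" for n
  define N where "N n = adj2 k ** M n" for n
  have dN: "det (N n) = 1" for n unfolding N_def M_def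
    using dk dh G_det[OF TF \<gamma>] by (simp add: det_mult2)
  define y where "y n = Im (mob (N n) \<i>)" for n
  have fN: "f (M n) = ((N n)$2$1)^2 + ((N n)$2$2)^2" for n unfolding f_def N_def ..
  have fpos: "f (M n) > 0" for n
  proof -
    have "(N n)$2$1 \<noteq> 0 \<or> (N n)$2$2 \<noteq> 0" using dN[of n] by (auto simp: det_2)
    then show ?thesis unfolding fN by (auto simp: add_pos_nonneg add_nonneg_pos)
  qed
  have y: "y n = 1 / f (M n)" for n unfolding y_def fN using mob_i[OF dN] by simp
  have ybig: "y n > real n + 1" for n
  proof -
    have "f (M n) < 1 / (real n + 1)" using fsmall unfolding M_def by simp
    then have "f (M n) * (real n + 1) < 1" by (simp add: field_simps)
    then show ?thesis unfolding y using fpos[of n] by (simp add: field_simps)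
  qed
  have ypos: "y n > 0" for n using ybig[of n] by linarith
  define a where "a n = sqrt (y n)" for n
  have apos: "a n > 0" for n unfolding a_def using ypos by simp
  have aa: "a n * a n = y n" for n unfolding a_def using ypos[of n] by simp
  define K where "K n = k ** mat2 (a n) 0 0 (1 / a n)" for n
  have dK: "det (K n) = 1" for n unfolding K_def using dk apos[of n] by (simp add: det_mult2)
  have col1K: "col1 (K n) = a n *\<^sub>R col1 k" for n
    unfolding K_def by (simp add: vec_eq_iff forall_2 mmult_nth2)
  have col1k: "col1 k \<noteq> 0" using dk by (auto simp: vec_eq_iff forall_2 det_2)
  have chd: "closed_horocycle_data \<Gamma> (K n)" for n
  proof -
    have "K n \<in> SL2" using dK by (simp add: SL2_def)
    moreover have "col1 (K n) \<noteq> 0" unfolding col1K using apos[of n] col1k by simp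
    moreover have "p *v col1 (K n) = s *\<^sub>R col1 (K n)"
      unfolding col1K by (simp add: matrix_vector_mult_scaleR fxk)
    ultimately show ?thesis
      unfolding closed_horocycle_data_def parabolic_fixed_point_def fixes_bdry_def using par pG by blast
  qed
  have Pexp: "P = k ** mat2 1 lam 0 1 ** adj2 k"
    using arg_cong[OF Pk, of "\<lambda>X. X ** adj2 k"] by (simp add: cancel_r dk)
  have HL: "0 \<le> horocycle_length \<Gamma> (K n) \<and> horocycle_length \<Gamma> (K n) \<le> lam / y n" for n
  proof -
    define S where "S = {l. l > 0 \<and> K n ** mat2 1 l 0 1 ** matrix_inv (K n) \<in> \<Gamma>}"
    have "K n ** mat2 1 (lam / y n) 0 1 ** adj2 (K n) = k ** mat2 1 lam 0 1 ** adj2 k"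
    proof -
      have "mat2 (a n) 0 0 (1 / a n) ** mat2 1 (lam / y n) 0 1 ** adj2 (mat2 (a n) 0 0 (1 / a n)) = mat2 1 lam 0 1"
        using apos[of n] aa[of n] ypos[of n] by (simp add: adj2_def mat2_mult field_simps)
      then have "k ** (mat2 (a n) 0 0 (1 / a n) ** mat2 1 (lam / y n) 0 1 ** adj2 (mat2 (a n) 0 0 (1 / a n))) ** adj2 k = k ** mat2 1 lam 0 1 ** adj2 k"
        by simp
      then show ?thesis unfolding K_def adj2_mult by (simp add: matrix_mul_assoc)
    qed
    then have mem: "lam / y n \<in> S" unfolding S_def using matrix_inv_adj2[OF dK] Pexp PG lam ypos[of n] by simp
    have bdd: "bdd_below S" unfolding S_def by (rule bdd_belowI[of _ 0]) auto
    have "Inf S \<le> lam / y n" using cInf_lower[OF mem bdd] .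
    moreover have "0 \<le> Inf S" using mem by (intro cInf_greatest) (auto simp: S_def)
    ultimately show ?thesis unfolding horocycle_length_def S_def by simp
  qed
  have HLlim: "(\<lambda>n. horocycle_length \<Gamma> (K n)) \<longlonglongrightarrow> 0"
  proof (rule squeeze0)
    show "0 \<le> horocycle_length \<Gamma> (K n)" for n using HL by simp
    show "horocycle_length \<Gamma> (K n) \<le> lam * inverse (real (Suc n))" for n
    proof -
      have "lam / y n \<le> lam * inverse (real (Suc n))"
      proof -
        have "lam * (1 + real n) \<le> lam * y n" using ybig[of n] lam by (intro mult_left_mono) auto
        then show ?thesis using ypos[of n] by (simp add: inverse_eq_divide field_simps algebra_simps)
      qed
      then show ?thesis using HL[of n] by linarith
    qed
    show "(\<lambda>n. lam * inverse (real (Suc n))) \<longlonglongrightarrow> 0" by (rule sq_lim)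
  qed
  have onhoro: "mob (\<gamma> n ** h ** geo_a (\<tau> n)) \<i> \<in> horocycle (K n)" for n
  proof -
    define z where "z = mob (N n) \<i>"
    define sv where "sv = Re z / y n"
    have Mk: "M n = k ** N n" unfolding N_def by (simp add: matrix_mul_assoc adj2_right dk)
    have "mob (M n) \<i> = mob k z" unfolding Mk z_def by (rule mob_mult[OF SL2_row2[OF dN]])
    moreover have "K n ** mat2 1 sv 0 1 = k ** mat2 (a n) (a n * sv) 0 (1 / a n)"
      unfolding K_def by (simp add: matrix_mul_assoc[symmetric] mat2_mult)
    moreover have "mob (k ** mat2 (a n) (a n * sv) 0 (1 / a n)) \<i> = mob k (mob (mat2 (a n) (a n * sv) 0 (1 / a n)) \<i>)"
      by (rule mob_mult) (use apos[of n] in \<open>simp add: complex_eq_iff\<close>)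
    moreover have "mob (mat2 (a n) (a n * sv) 0 (1 / a n)) \<i> = z"
    proof -
      have "mob (mat2 (a n) (a n * sv) 0 (1 / a n)) \<i> = complex_of_real (a n * a n) * (\<i> + complex_of_real sv)"
        unfolding mob_def using apos[of n] by (simp add: field_simps)
      also have "\<dots> = z" unfolding aa sv_def using ypos[of n]
        by (simp add: complex_eq_iff y_def z_def)
      finally show ?thesis .
    qed
    ultimately have "mob (M n) \<i> = mob (K n ** mat2 1 sv 0 1) \<i>" by simp
    then show ?thesis unfolding horocycle_def M_def by blast
  qed
  show ?thesis unfolding cusp_recurrent_def
    using notpar chd HLlim \<tau> onhoro \<gamma> by blast
qed

end
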